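(* The rules $\mathrm{MC}$, $\mathrm{MCC}$, $\mathrm{RA}$ and $\mathrm{FULL}_H$ are agenda separable: for each such rule $R$, every agenda $\mathcal{A}$, every independent partition $\{\mathcal{A}_1,\mathcal{A}_2\}$ of $\mathcal{A}$ and every profile $P\in\mathcal{J}_{\mathcal{A}}^n$, $R(P)=\{J^1\cup J^2 \mid J^1\in R(P\downarrow\mathcal{A}_1),\ J^2\in R(P\downarrow\mathcal{A}_2)\}$.
   Context: Fix a propositional language, a consistent formula $\Gamma$ (the integrity constraint) and a number $n\ge1$ of agents. An issue is a pair $\{\varphi,\neg\varphi\}$ with $\varphi$ neither a tautology nor a contradiction. An agenda $\mathcal{A}$ is a finite set of issues; a sub-agenda is a union of some issues of $\mathcal{A}$. A set $S$ of formulas is consistent if $S\cup\{\Gamma\}$ is satisfiable. A judgment set over $\mathcal{A}$ is a subset $J\subseteq\mathcal{A}$; it is complete if it contains $\varphi$ or $\neg\varphi$ for each issue. $\mathcal{J}_{\mathcal{A}}$ is the set of complete consistent judgment sets over $\mathcal{A}$ (likewise for sub-agendas, same $\Gamma$). A profile is $P=\langle J_1,\dots,J_n\rangle\in\mathcal{J}_{\mathcal{A}}^n$; $P\downarrow\mathcal{A}'=\langle J_1\cap\mathcal{A}',\dots,J_n\cap\mathcal{A}'\rangle$. $N(P,\varphi)=|\{i:\varphi\in J_i\}|$; $m(P)=\{\varphi\in\mathcal{A}: N(P,\varphi)>n/2\}$; $P$ is majority-consistent if $m(P)$ is consistent. $d_H(J,J')=|J\setminus J'|$, and for profiles $P=\langle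 J_i\rangle$, $Q=\langle J'_i\rangle$, $D_H(P,Q)=\sum_i d_H(J_i,J'_i)$. A partition $\{\mathcal{A}_1,\mathcal{A}_2\}$ of $\mathcal{A}$ into sub-agendas is independent if for all $J^1\in\mathcal{J}_{\mathcal{A}_1}$, $J^2\in\mathcal{J}_{\mathcal{A}_2}$, $J^1\cup J^2$ is consistent. Rules: $\mathrm{MC}(P)$ is the set of $J\in\mathcal{J}_{\mathcal{A}}$ with $J\supseteq S$ for some inclusion-maximal consistent subset $S$ of $m(P)$. $\mathrm{MCC}(P)$ is the set of $J\in\mathcal{J}_{\mathcal{A}}$ with $J\supseteq S$ for some consistent subset $S$ of $m(P)$ of maximum cardinality. $\mathrm{RA}$ (ranked agenda): writing $\mathcal{A}=\{\psi_1,\dots,\psi_{2m}\}$, for each permutation $\sigma$ such that $N(P,\psi_{\sigma(1)})\ge\dots\ge N(P,\psi_{\sigma(2m)})$, let $J_\sigma$ be obtained by starting from $S=\emptyset$ and, for $j=1,\dots,2m$, adding $\psi_{\sigma(j)}$ to $S$ if $S\cup\{\psi_{\sigma(j)}\}$ is consistent; $\mathrm{RA}(P)$ is the set of all such $J_\sigma$. $\mathrm{FULL}_H(P)$ is the set of $J\in\mathcal{J}_{\mathcal{A}}$ with $J\supseteq m(Q)$ for some majority-consistent profile $Q\in\mathcal{J}_{\mathcal{A}}^n$ minimizing $D_H(P,Q)$ among majority-consistent profiles. *)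

theory Defs
  imports Main
begin

datatype 'v form =
    Atom 'v
  | FFalse
  | Neg "'v form"
  | Conj "'v form" "'v form"
  | Disj "'v form" "'v form"
  | Imp "'v form" "'v form"

fun holds :: "('v \<Rightarrow> bool) \<Rightarrow> 'v form \<Rightarrow> bool" where
  "holds v (Atom a) = v a"
| "holds v FFalse = False"
| "holds v (Neg \<phi>) = (\<not> holds v \<phi>)"
| "holds v (Conj \<phi> \<psi>) = (holds v \<phi> \<and> holds v \<psi>)"
| "holds v (Disj \<phi> \<psi>) = (holds v \<phi> \<or> holds v \<psi>)"
| "holds v (Imp \<phi> \<psi>) = (holds v \<phi> \<longrightarrow> holds v \<psi>)"

definition tautology :: "'v form \<Rightarrow> bool" where
  "tautology \<phi> \<longleftrightarrow> (\<forall>v. holds v \<phi>)"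

definition contradiction :: "'v form \<Rightarrow> bool" where
  "contradiction \<phi> \<longleftrightarrow> (\<forall>v. \<not> holds v \<phi>)"

text \<open>A set of formulas is consistent if together with the integrity constraint it is satisfiable.\<close>
definition consistent :: "'v form \<Rightarrow> 'v form set \<Rightarrow> bool" where
  "consistent \<Gamma> S \<longleftrightarrow> (\<exists>v. holds v \<Gamma> \<and> (\<forall>\<phi>\<in>S. holds v \<phi>))"

definition issue :: "'v form set \<Rightarrow> bool" where
  "issue I \<longleftrightarrow> (\<exists>\<phi>. I = {\<phi>, Neg \<phi>} \<and> \<not> tautology \<phi> \<and> \<not> contradiction \<phi>)"

definition agenda :: "'v form set set \<Rightarrow> bool" where
  "agenda Ag \<longleftrightarrow> finite Ag \<and> (\<forall>I\<in>Ag. issue I)"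

definition complete :: "'v form set set \<Rightarrow> 'v form set \<Rightarrow> bool" where
  "complete Ag J \<longleftrightarrow> (\<forall>\<phi>. {\<phi>, Neg \<phi>} \<in> Ag \<longrightarrow> \<phi> \<in> J \<or> Neg \<phi> \<in> J)"

definition JS :: "'v form \<Rightarrow> 'v form set set \<Rightarrow> 'v form set set" where
  "JS \<Gamma> Ag = {J. J \<subseteq> \<Union>Ag \<and> complete Ag J \<and> consistent \<Gamma> J}"

definition profiles :: "'v form \<Rightarrow> 'v form set set \<Rightarrow> nat \<Rightarrow> 'v form set list set" where
  "profiles \<Gamma> Ag n = {P. length P = n \<and> set P \<subseteq> JS \<Gamma> Ag}"

definition restr :: "'v form set list \<Rightarrow> 'v form set set \<Rightarrow> 'v form set list" where
  "restr P Ag' = map (\<lambda>J. J \<inter> \<Union>Ag') P"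

definition support :: "'v form set list \<Rightarrow> 'v form \<Rightarrow> nat" where
  "support P \<phi> = length (filter (\<lambda>J. \<phi> \<in> J) P)"

definition maj :: "'v form set set \<Rightarrow> 'v form set list \<Rightarrow> 'v form set" where
  "maj Ag P = {\<phi> \<in> \<Union>Ag. length P < 2 * support P \<phi>}"

definition dH :: "'v form set \<Rightarrow> 'v form set \<Rightarrow> nat" where
  "dH J J' = card (J - J')"

definition DH :: "'v form set list \<Rightarrow> 'v form set list \<Rightarrow> nat" where
  "DH P Q = sum_list (map (\<lambda>(J, J'). dH J J') (zip P Q))"

definition independent_partition ::
  "'v form \<Rightarrow> 'v form set set \<Rightarrow> 'v form set set \<Rightarrow> 'v form set set \<Rightarrow> bool" where
  "independent_partition \<Gamma> Ag Ag1 Ag2 \<longleftrightarrow>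
     Ag1 \<subseteq> Ag \<and> Ag2 \<subseteq> Ag \<and> Ag1 \<union> Ag2 = Ag \<and>
     \<Union>Ag1 \<inter> \<Union>Ag2 = {} \<and> Ag1 \<noteq> {} \<and> Ag2 \<noteq> {} \<and>
     (\<forall>J1 \<in> JS \<Gamma> Ag1. \<forall>J2 \<in> JS \<Gamma> Ag2. consistent \<Gamma> (J1 \<union> J2))"

definition MC :: "'v form \<Rightarrow> 'v form set set \<Rightarrow> 'v form set list \<Rightarrow> 'v form set set" where
  "MC \<Gamma> Ag P = {J \<in> JS \<Gamma> Ag. \<exists>S. S \<subseteq> maj Ag P \<and> consistent \<Gamma> S \<and>
      (\<forall>S'. S \<subseteq> S' \<and> S' \<subseteq> maj Ag P \<and> consistent \<Gamma> S' \<longrightarrow> S' = S) \<and> S \<subseteq> J}"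

definition MCC :: "'v form \<Rightarrow> 'v form set set \<Rightarrow> 'v form set list \<Rightarrow> 'v form set set" where
  "MCC \<Gamma> Ag P = {J \<in> JS \<Gamma> Ag. \<exists>S. S \<subseteq> maj Ag P \<and> consistent \<Gamma> S \<and>
      (\<forall>S'. S' \<subseteq> maj Ag P \<and> consistent \<Gamma> S' \<longrightarrow> card S' \<le> card S) \<and> S \<subseteq> J}"

fun greedy :: "'v form \<Rightarrow> 'v form list \<Rightarrow> 'v form set \<Rightarrow> 'v form set" where
  "greedy \<Gamma> [] S = S"
| "greedy \<Gamma> (x # xs) S =
     greedy \<Gamma> xs (if consistent \<Gamma> (insert x S) then insert x S else S)"

definition RA :: "'v form \<Rightarrow> 'v form set set \<Rightarrow> 'v form set list \<Rightarrow> 'v form set set" where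
  "RA \<Gamma> Ag P = {greedy \<Gamma> xs {} | xs. distinct xs \<and> set xs = \<Union>Ag \<and>
      sorted_wrt (\<lambda>a b. support P b \<le> support P a) xs}"

definition FULL_H :: "'v form \<Rightarrow> 'v form set set \<Rightarrow> 'v form set list \<Rightarrow> 'v form set set" where
  "FULL_H \<Gamma> Ag P = {J \<in> JS \<Gamma> Ag. \<exists>Q. Q \<in> profiles \<Gamma> Ag (length P) \<and> consistent \<Gamma> (maj Ag Q) \<and>
      (\<forall>Q'. Q' \<in> profiles \<Gamma> Ag (length P) \<and> consistent \<Gamma> (maj Ag Q') \<longrightarrow> DH P Q \<le> DH P Q') \<and>
      maj Ag Q \<subseteq> J}"

end

theory Submission
  imports Defs
begin


lemma cons_mono: "consistent G T \<Longrightarrow> S \<subseteq> T \<Longrightarrow> consistent G S"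
  by (auto simp: consistent_def)

lemma ext_JS: assumes "consistent G S" "S \<subseteq> \<Union>A" shows "\<exists>J\<in>JS G A. S \<subseteq> J"
proof -
  obtain v where v: "holds v G" "\<forall>\<phi>\<in>S. holds v \<phi>" using assms(1) by (auto simp: consistent_def)
  let ?J = "{\<phi>\<in>\<Union>A. holds v \<phi>}"
  have "?J \<in> JS G A" unfolding JS_def complete_def consistent_def using v by auto
  moreover have "S \<subseteq> ?J" using v assms(2) by auto
  ultimately show ?thesis by blast
qed

lemma JS_sub: "J \<in> JS G A \<Longrightarrow> J \<subseteq> \<Union>A" by (auto simp: JS_def)

lemma indep_cons:
  assumes ip: "independent_partition G Ag Ag1 Ag2" and "consistent G S1" "S1 \<subseteq> \<Union>Ag1"
    "consistent G S2" "S2 \<subseteq> \<Union>Ag2"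
  shows "consistent G (S1 \<union> S2)"
proof -
  obtain J1 where "J1 \<in> JS G Ag1" "S1 \<subseteq> J1" using ext_JS assms by blast
  moreover obtain J2 where "J2 \<in> JS G Ag2" "S2 \<subseteq> J2" using ext_JS assms by blast
  ultimately have "consistent G (J1 \<union> J2)" using ip unfolding independent_partition_def by blast
  then show ?thesis by (rule cons_mono) (use \<open>S1 \<subseteq> J1\<close> \<open>S2 \<subseteq> J2\<close> in auto)
qed

lemma JS_restr: assumes "J \<in> JS G Ag" "A \<subseteq> Ag" shows "J \<inter> \<Union>A \<in> JS G A"
  using assms unfolding JS_def complete_def
  by (auto intro: cons_mono)

lemma JS_union:
  assumes ip: "independent_partition G Ag Ag1 Ag2" and "J1 \<in> JS G Ag1" "J2 \<in> JS G Ag2"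
  shows "J1 \<union> J2 \<in> JS G Ag"
proof -
  have c: "consistent G (J1 \<union> J2)" using ip assms unfolding independent_partition_def by blast
  have u: "Ag = Ag1 \<union> Ag2" using ip unfolding independent_partition_def by blast
  show ?thesis using assms c u unfolding JS_def complete_def by auto
qed

lemma length_restr[simp]: "length (restr P A) = length P" by (simp add: restr_def)

lemma support_restr: "\<phi> \<in> \<Union>A \<Longrightarrow> support (restr P A) \<phi> = support P \<phi>"
  unfolding support_def restr_def by (simp add: filter_map o_def)

lemma maj_restr: "A \<subseteq> Ag \<Longrightarrow> maj A (restr P A) = maj Ag P \<inter> \<Union>A"
  unfolding maj_def by auto (metis UnionI support_restr)+

lemma ip_facts: assumes "independent_partition G Ag Ag1 Ag2"
  shows "Ag1 \<subseteq> Ag" "Ag2 \<subseteq> Ag" "\<Union>Ag = \<Union>Ag1 \<union> \<Union>Ag2" "\<Union>Ag1 \<inter> \<Union>Ag2 = {}"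
  using assms unfolding independent_partition_def by auto

lemma maj_split: assumes "independent_partition G Ag Ag1 Ag2"
  shows "maj Ag Q = maj Ag1 (restr Q Ag1) \<union> maj Ag2 (restr Q Ag2)"
  using ip_facts[OF assms] maj_restr[of Ag1 Ag Q] maj_restr[of Ag2 Ag Q] unfolding maj_def by auto

lemma sep:
  assumes "\<forall>J\<in>R. J \<subseteq> X \<union> Y" "\<forall>J\<in>R. J\<inter>X \<in> R1 \<and> J\<inter>Y \<in> R2"
    "\<forall>J1\<in>R1. \<forall>J2\<in>R2. J1\<union>J2 \<in> R"
  shows "R = {J1\<union>J2 | J1 J2. J1\<in>R1 \<and> J2\<in>R2}"
proof (intro equalityI subsetI)
  fix J assume "J \<in> R"
  then have "J = (J\<inter>X) \<union> (J\<inter>Y)" using assms(1) by blast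
  then show "J \<in> {J1\<union>J2 | J1 J2. J1\<in>R1 \<and> J2\<in>R2}" using assms(2) \<open>J\<in>R\<close> by blast
qed (use assms(3) in blast)



lemma MC_sep:
  assumes ip: "independent_partition G Ag Ag1 Ag2"
  shows "MC G Ag P = {J1\<union>J2 | J1 J2. J1 \<in> MC G Ag1 (restr P Ag1) \<and> J2 \<in> MC G Ag2 (restr P Ag2)}"
proof (rule sep[where X="\<Union>Ag1" and Y="\<Union>Ag2"])
  note f = ip_facts[OF ip]
  define M1 where "M1 = maj Ag1 (restr P Ag1)"
  define M2 where "M2 = maj Ag2 (restr P Ag2)"
  have mj: "maj Ag P = M1 \<union> M2" unfolding M1_def M2_def by (rule maj_split[OF ip])
  have m1: "M1 \<subseteq> \<Union>Ag1" "M2 \<subseteq> \<Union>Ag2" by (auto simp: maj_def M1_def M2_def)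
  have dj: "\<Union>Ag1 \<inter> \<Union>Ag2 = {}" by (fact f(4))
  show "\<forall>J\<in>MC G Ag P. J \<subseteq> \<Union>Ag1 \<union> \<Union>Ag2" using f(3) by (auto simp: MC_def JS_def)
  show "\<forall>J\<in>MC G Ag P. J \<inter> \<Union>Ag1 \<in> MC G Ag1 (restr P Ag1) \<and> J \<inter> \<Union>Ag2 \<in> MC G Ag2 (restr P Ag2)"
  proof
    fix J assume "J \<in> MC G Ag P"
    then obtain S where J: "J \<in> JS G Ag" and S0: "S \<subseteq> maj Ag P" and S: "consistent G S" "S \<subseteq> J"
      and mx0: "\<forall>S'. S \<subseteq> S' \<and> S' \<subseteq> maj Ag P \<and> consistent G S' \<longrightarrow> S' = S"
      unfolding MC_def mem_Collect_eq by (elim conjE exE) (intro that)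
    have mx: "\<And>S'. S \<subseteq> S' \<Longrightarrow> S' \<subseteq> M1 \<union> M2 \<Longrightarrow> consistent G S' \<Longrightarrow> S' = S"
      using mx0 unfolding mj by blast
    have "S \<subseteq> M1 \<union> M2" using S0 unfolding mj .
    note S = this S
    define S1 where "S1 = S \<inter> \<Union>Ag1"
    define S2 where "S2 = S \<inter> \<Union>Ag2"
    have Sd: "S = S1 \<union> S2" using S(1) m1 unfolding S1_def S2_def by auto
    have s1: "S1 \<subseteq> M1" "S2 \<subseteq> M2" using S(1) m1 dj unfolding S1_def S2_def by blast+
    have ss: "S1 \<subseteq> \<Union>Ag1" "S2 \<subseteq> \<Union>Ag2" unfolding S1_def S2_def by auto
    have c1: "consistent G S1" "consistent G S2" using S(2) unfolding S1_def S2_def by (auto intro: cons_mono)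
    have "J \<inter> \<Union>Ag1 \<in> MC G Ag1 (restr P Ag1)"
      unfolding MC_def M1_def[symmetric]
    proof (intro CollectI conjI exI[of _ S1])
      show "J \<inter> \<Union>Ag1 \<in> JS G Ag1" using JS_restr J f by blast
      show "S1 \<subseteq> M1" by (fact s1(1))
      show "consistent G S1" by (fact c1(1))
      show "S1 \<subseteq> J \<inter> \<Union>Ag1" using S(3) unfolding S1_def by auto
      show "\<forall>S'. S1 \<subseteq> S' \<and> S' \<subseteq> M1 \<and> consistent G S' \<longrightarrow> S' = S1"
      proof (intro allI impI, elim conjE)
        fix S' assume a: "S1 \<subseteq> S'" "S' \<subseteq> M1" "consistent G S'"
        have "consistent G (S' \<union> S2)"
          by (rule indep_cons[OF ip a(3) _ c1(2)]) (use a(2) m1 S2_def in auto)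
        moreover have "S \<subseteq> S' \<union> S2" using Sd a(1) by auto
        moreover have "S' \<union> S2 \<subseteq> M1 \<union> M2" using a(2) s1 by auto
        ultimately have "S' \<union> S2 = S" using mx by blast
        then have "S' = S \<inter> \<Union>Ag1" using a(2) m1(1) ss(2) dj by blast
        then show "S' = S1" unfolding S1_def .
      qed
    qed
    moreover have "J \<inter> \<Union>Ag2 \<in> MC G Ag2 (restr P Ag2)"
      unfolding MC_def M2_def[symmetric]
    proof (intro CollectI conjI exI[of _ S2])
      show "J \<inter> \<Union>Ag2 \<in> JS G Ag2" using JS_restr J f by blast
      show "S2 \<subseteq> M2" by (fact s1(2))
      show "consistent G S2" by (fact c1(2))
      show "S2 \<subseteq> J \<inter> \<Union>Ag2" using S(3) unfolding S2_def by auto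
      show "\<forall>S'. S2 \<subseteq> S' \<and> S' \<subseteq> M2 \<and> consistent G S' \<longrightarrow> S' = S2"
      proof (intro allI impI, elim conjE)
        fix S' assume a: "S2 \<subseteq> S'" "S' \<subseteq> M2" "consistent G S'"
        have "consistent G (S1 \<union> S')"
          by (rule indep_cons[OF ip c1(1) _ a(3)]) (use a(2) m1 S1_def in auto)
        moreover have "S \<subseteq> S1 \<union> S'" using Sd a(1) by auto
        moreover have "S1 \<union> S' \<subseteq> M1 \<union> M2" using a(2) s1 by auto
        ultimately have "S1 \<union> S' = S" using mx by blast
        then have "S' = S \<inter> \<Union>Ag2" using a(2) m1(2) ss(1) dj by blast
        then show "S' = S2" unfolding S2_def .
      qed
    qed
    ultimately show "J \<inter> \<Union>Ag1 \<in> MC G Ag1 (restr P Ag1) \<and> J \<inter> \<Union>Ag2 \<in> MC G Ag2 (restr P Ag2)" ..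
  qed
  show "\<forall>J1\<in>MC G Ag1 (restr P Ag1). \<forall>J2\<in>MC G Ag2 (restr P Ag2). J1 \<union> J2 \<in> MC G Ag P"
  proof (intro ballI)
    fix J1 J2 assume h1: "J1 \<in> MC G Ag1 (restr P Ag1)" and h2: "J2 \<in> MC G Ag2 (restr P Ag2)"
    from h1 obtain S1 where J1: "J1 \<in> JS G Ag1"
      and S1: "S1 \<subseteq> M1" "consistent G S1" "S1 \<subseteq> J1"
      and mx1: "\<forall>S'. S1 \<subseteq> S' \<and> S' \<subseteq> M1 \<and> consistent G S' \<longrightarrow> S' = S1"
      unfolding MC_def M1_def[symmetric] mem_Collect_eq by (elim conjE exE) (intro that)
    from h2 obtain S2 where J2: "J2 \<in> JS G Ag2"
      and S2: "S2 \<subseteq> M2" "consistent G S2" "S2 \<subseteq> J2"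
      and mx2: "\<forall>S'. S2 \<subseteq> S' \<and> S' \<subseteq> M2 \<and> consistent G S' \<longrightarrow> S' = S2"
      unfolding MC_def M2_def[symmetric] mem_Collect_eq by (elim conjE exE) (intro that)
    note J = J1 J2
    note S = S1 S2
    show "J1 \<union> J2 \<in> MC G Ag P" unfolding MC_def mj
    proof (intro CollectI conjI exI[of _ "S1 \<union> S2"])
      show "J1 \<union> J2 \<in> JS G Ag" by (rule JS_union[OF ip J])
      show "S1 \<union> S2 \<subseteq> M1 \<union> M2" using S by auto
      show "consistent G (S1 \<union> S2)" by (rule indep_cons[OF ip]) (use S m1 in auto)
      show "S1 \<union> S2 \<subseteq> J1 \<union> J2" using S by auto
      show "\<forall>S'. S1 \<union> S2 \<subseteq> S' \<and> S' \<subseteq> M1 \<union> M2 \<and> consistent G S' \<longrightarrow> S' = S1 \<union> S2"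
      proof (intro allI impI, elim conjE)
        fix S' assume a: "S1 \<union> S2 \<subseteq> S'" "S' \<subseteq> M1 \<union> M2" "consistent G S'"
        have cc: "consistent G (S' \<inter> \<Union>Ag1)" "consistent G (S' \<inter> \<Union>Ag2)"
          using a(3) by (auto intro: cons_mono)
        have "S' \<inter> \<Union>Ag1 = S1"
        proof (rule mx1[rule_format, OF conjI[OF _ conjI]])
          show "S1 \<subseteq> S' \<inter> \<Union>Ag1" using a(1) S(1) m1 by auto
          show "S' \<inter> \<Union>Ag1 \<subseteq> M1" using a(2) m1 dj by blast
        qed (fact cc(1))
        moreover have "S' \<inter> \<Union>Ag2 = S2"
        proof (rule mx2[rule_format, OF conjI[OF _ conjI]])
          show "S2 \<subseteq> S' \<inter> \<Union>Ag2" using a(1) S(4) m1 by auto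
          show "S' \<inter> \<Union>Ag2 \<subseteq> M2" using a(2) m1 dj by blast
        qed (fact cc(2))
        ultimately show "S' = S1 \<union> S2" using a(2) m1 by auto
      qed
    qed
  qed
qed



lemma MCC_sep:
  assumes ip: "independent_partition G Ag Ag1 Ag2" and fin: "finite (\<Union>Ag)"
  shows "MCC G Ag P = {J1\<union>J2 | J1 J2. J1 \<in> MCC G Ag1 (restr P Ag1) \<and> J2 \<in> MCC G Ag2 (restr P Ag2)}"
proof (rule sep[where X="\<Union>Ag1" and Y="\<Union>Ag2"])
  note f = ip_facts[OF ip]
  define M1 where "M1 = maj Ag1 (restr P Ag1)"
  define M2 where "M2 = maj Ag2 (restr P Ag2)"
  have mj: "maj Ag P = M1 \<union> M2" unfolding M1_def M2_def by (rule maj_split[OF ip])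
  have m1: "M1 \<subseteq> \<Union>Ag1" "M2 \<subseteq> \<Union>Ag2" by (auto simp: maj_def M1_def M2_def)
  have dj: "\<Union>Ag1 \<inter> \<Union>Ag2 = {}" by (fact f(4))
  have fin1: "finite (\<Union>Ag1)" "finite (\<Union>Ag2)" using fin f(3) by auto
  have cardsplit: "card T = card (T \<inter> \<Union>Ag1) + card (T \<inter> \<Union>Ag2)" if "T \<subseteq> \<Union>Ag" for T
  proof -
    have "T = (T \<inter> \<Union>Ag1) \<union> (T \<inter> \<Union>Ag2)" using that f(3) by blast
    moreover have "card ((T \<inter> \<Union>Ag1) \<union> (T \<inter> \<Union>Ag2)) = card (T \<inter> \<Union>Ag1) + card (T \<inter> \<Union>Ag2)"
      by (rule card_Un_disjoint) (use fin1 dj in auto)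
    ultimately show ?thesis by simp
  qed
  have cardU: "card (A \<union> B) = card A + card B" if "A \<subseteq> \<Union>Ag1" "B \<subseteq> \<Union>Ag2" for A B
    by (rule card_Un_disjoint) (use that fin1 dj finite_subset in blast)+
  show "\<forall>J\<in>MCC G Ag P. J \<subseteq> \<Union>Ag1 \<union> \<Union>Ag2" using f(3) by (auto simp: MCC_def JS_def)
  show "\<forall>J\<in>MCC G Ag P. J \<inter> \<Union>Ag1 \<in> MCC G Ag1 (restr P Ag1) \<and> J \<inter> \<Union>Ag2 \<in> MCC G Ag2 (restr P Ag2)"
  proof
    fix J assume "J \<in> MCC G Ag P"
    then obtain S where J: "J \<in> JS G Ag" and S0: "S \<subseteq> maj Ag P" and S: "consistent G S" "S \<subseteq> J"
      and mx0: "\<forall>S'. S' \<subseteq> maj Ag P \<and> consistent G S' \<longrightarrow> card S' \<le> card S"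
      unfolding MCC_def mem_Collect_eq by (elim conjE exE) (intro that)
    have mx: "\<And>S'. S' \<subseteq> M1 \<union> M2 \<Longrightarrow> consistent G S' \<Longrightarrow> card S' \<le> card S"
      using mx0 unfolding mj by blast
    have "S \<subseteq> M1 \<union> M2" using S0 unfolding mj .
    note S = this S
    define S1 where "S1 = S \<inter> \<Union>Ag1"
    define S2 where "S2 = S \<inter> \<Union>Ag2"
    have Sd: "S = S1 \<union> S2" using S(1) m1 unfolding S1_def S2_def by auto
    have ss: "S1 \<subseteq> \<Union>Ag1" "S2 \<subseteq> \<Union>Ag2" unfolding S1_def S2_def by auto
    have s1: "S1 \<subseteq> M1" "S2 \<subseteq> M2" using S(1) m1 dj unfolding S1_def S2_def by blast+
    have c1: "consistent G S1" "consistent G S2" using S(2) unfolding S1_def S2_def by (auto intro: cons_mono)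
    have cS: "card S = card S1 + card S2" unfolding Sd by (rule cardU[OF ss])
    have "J \<inter> \<Union>Ag1 \<in> MCC G Ag1 (restr P Ag1)"
      unfolding MCC_def M1_def[symmetric]
    proof (intro CollectI conjI exI[of _ S1])
      show "J \<inter> \<Union>Ag1 \<in> JS G Ag1" using JS_restr J f by blast
      show "S1 \<subseteq> M1" by (fact s1(1))
      show "consistent G S1" by (fact c1(1))
      show "S1 \<subseteq> J \<inter> \<Union>Ag1" using S(3) unfolding S1_def by auto
      show "\<forall>S'. S' \<subseteq> M1 \<and> consistent G S' \<longrightarrow> card S' \<le> card S1"
      proof (intro allI impI, elim conjE)
        fix S' assume a: "S' \<subseteq> M1" "consistent G S'"
        have "consistent G (S' \<union> S2)"
          by (rule indep_cons[OF ip a(2) _ c1(2)]) (use a(1) m1 ss in auto)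
        moreover have "S' \<union> S2 \<subseteq> M1 \<union> M2" using a(1) s1 by auto
        ultimately have "card (S' \<union> S2) \<le> card S" using mx by blast
        moreover have "card (S' \<union> S2) = card S' + card S2" by (rule cardU) (use a(1) m1 ss in auto)
        ultimately show "card S' \<le> card S1" using cS by simp
      qed
    qed
    moreover have "J \<inter> \<Union>Ag2 \<in> MCC G Ag2 (restr P Ag2)"
      unfolding MCC_def M2_def[symmetric]
    proof (intro CollectI conjI exI[of _ S2])
      show "J \<inter> \<Union>Ag2 \<in> JS G Ag2" using JS_restr J f by blast
      show "S2 \<subseteq> M2" by (fact s1(2))
      show "consistent G S2" by (fact c1(2))
      show "S2 \<subseteq> J \<inter> \<Union>Ag2" using S(3) unfolding S2_def by auto
      show "\<forall>S'. S' \<subseteq> M2 \<and> consistent G S' \<longrightarrow> card S' \<le> card S2"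
      proof (intro allI impI, elim conjE)
        fix S' assume a: "S' \<subseteq> M2" "consistent G S'"
        have "consistent G (S1 \<union> S')"
          by (rule indep_cons[OF ip c1(1) _ a(2)]) (use a(1) m1 ss in auto)
        moreover have "S1 \<union> S' \<subseteq> M1 \<union> M2" using a(1) s1 by auto
        ultimately have "card (S1 \<union> S') \<le> card S" using mx by blast
        moreover have "card (S1 \<union> S') = card S1 + card S'" by (rule cardU) (use a(1) m1 ss in auto)
        ultimately show "card S' \<le> card S2" using cS by simp
      qed
    qed
    ultimately show "J \<inter> \<Union>Ag1 \<in> MCC G Ag1 (restr P Ag1) \<and> J \<inter> \<Union>Ag2 \<in> MCC G Ag2 (restr P Ag2)" ..
  qed
  show "\<forall>J1\<in>MCC G Ag1 (restr P Ag1). \<forall>J2\<in>MCC G Ag2 (restr P Ag2). J1 \<union> J2 \<in> MCC G Ag P"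
  proof (intro ballI)
    fix J1 J2 assume h1: "J1 \<in> MCC G Ag1 (restr P Ag1)" and h2: "J2 \<in> MCC G Ag2 (restr P Ag2)"
    from h1 obtain S1 where J1: "J1 \<in> JS G Ag1"
      and S1: "S1 \<subseteq> M1" "consistent G S1" "S1 \<subseteq> J1"
      and mx1: "\<forall>S'. S' \<subseteq> M1 \<and> consistent G S' \<longrightarrow> card S' \<le> card S1"
      unfolding MCC_def M1_def[symmetric] mem_Collect_eq by (elim conjE exE) (intro that)
    from h2 obtain S2 where J2: "J2 \<in> JS G Ag2"
      and S2: "S2 \<subseteq> M2" "consistent G S2" "S2 \<subseteq> J2"
      and mx2: "\<forall>S'. S' \<subseteq> M2 \<and> consistent G S' \<longrightarrow> card S' \<le> card S2"
      unfolding MCC_def M2_def[symmetric] mem_Collect_eq by (elim conjE exE) (intro that)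
    show "J1 \<union> J2 \<in> MCC G Ag P" unfolding MCC_def mj
    proof (intro CollectI conjI exI[of _ "S1 \<union> S2"])
      show "J1 \<union> J2 \<in> JS G Ag" by (rule JS_union[OF ip J1 J2])
      show "S1 \<union> S2 \<subseteq> M1 \<union> M2" using S1 S2 by auto
      show "consistent G (S1 \<union> S2)" by (rule indep_cons[OF ip]) (use S1 S2 m1 in auto)
      show "S1 \<union> S2 \<subseteq> J1 \<union> J2" using S1 S2 by auto
      show "\<forall>S'. S' \<subseteq> M1 \<union> M2 \<and> consistent G S' \<longrightarrow> card S' \<le> card (S1 \<union> S2)"
      proof (intro allI impI, elim conjE)
        fix S' assume a: "S' \<subseteq> M1 \<union> M2" "consistent G S'"
        have cc: "consistent G (S' \<inter> \<Union>Ag1)" "consistent G (S' \<inter> \<Union>Ag2)"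
          using a(2) by (auto intro: cons_mono)
        have "S' \<inter> \<Union>Ag1 \<subseteq> M1" using a(1) m1 dj by blast
        then have le1: "card (S' \<inter> \<Union>Ag1) \<le> card S1" using mx1 cc(1) by blast
        have "S' \<inter> \<Union>Ag2 \<subseteq> M2" using a(1) m1 dj by blast
        then have le2: "card (S' \<inter> \<Union>Ag2) \<le> card S2" using mx2 cc(2) by blast
        have "S' \<subseteq> \<Union>Ag" using a(1) m1 f(3) by blast
        then have "card S' = card (S' \<inter> \<Union>Ag1) + card (S' \<inter> \<Union>Ag2)" by (rule cardsplit)
        moreover have "card (S1 \<union> S2) = card S1 + card S2" by (rule cardU) (use S1 S2 m1 in auto)
        ultimately show "card S' \<le> card (S1 \<union> S2)" using le1 le2 by simp
      qed
    qed
  qed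
qed



lemma greedy_sub: "greedy G xs S \<subseteq> S \<union> set xs"
proof (induction xs arbitrary: S)
  case (Cons a xs)
  have "greedy G (a # xs) S = greedy G xs (if consistent G (insert a S) then insert a S else S)" by simp
  also have "\<dots> \<subseteq> (if consistent G (insert a S) then insert a S else S) \<union> set xs" by (rule Cons.IH)
  also have "\<dots> \<subseteq> S \<union> set (a # xs)" by auto
  finally show ?case .
qed simp

lemma greedy_split:
  assumes ip: "independent_partition G Ag Ag1 Ag2"
  shows "set xs \<subseteq> \<Union>Ag1 \<union> \<Union>Ag2 \<Longrightarrow> consistent G S1 \<Longrightarrow> S1 \<subseteq> \<Union>Ag1 \<Longrightarrow>
    consistent G S2 \<Longrightarrow> S2 \<subseteq> \<Union>Ag2 \<Longrightarrow>
    greedy G xs (S1 \<union> S2) = greedy G (filter (\<lambda>x. x \<in> \<Union>Ag1) xs) S1 \<union> greedy G (filter (\<lambda>x. x \<in> \<Union>Ag2) xs) S2"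
proof (induction xs arbitrary: S1 S2)
  case Nil
  then show ?case by simp
next
  case (Cons x xs)
  note dj = ip_facts(4)[OF ip]
  show ?case
  proof (cases "x \<in> \<Union>Ag1")
    case True
    then have nx: "x \<notin> \<Union>Ag2" using dj by blast
    define S1' where "S1' = (if consistent G (insert x S1) then insert x S1 else S1)"
    have eq: "consistent G (insert x (S1 \<union> S2)) = consistent G (insert x S1)"
    proof
      assume "consistent G (insert x (S1 \<union> S2))" then show "consistent G (insert x S1)"
        by (rule cons_mono) auto
    next
      assume "consistent G (insert x S1)"
      then have "consistent G (insert x S1 \<union> S2)"
        by (rule indep_cons[OF ip _ _ Cons.prems(4,5)]) (use True Cons.prems(3) in auto)
      then show "consistent G (insert x (S1 \<union> S2))" by simp
    qed
    have e2: "(if consistent G (insert x (S1 \<union> S2)) then insert x (S1 \<union> S2) else S1 \<union> S2) = S1' \<union> S2"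
      unfolding eq S1'_def by auto
    have c1: "consistent G S1'" "S1' \<subseteq> \<Union>Ag1" unfolding S1'_def using Cons.prems True by auto
    have "greedy G (x # xs) (S1 \<union> S2) = greedy G xs (S1' \<union> S2)" using e2 by simp
    also have "\<dots> = greedy G (filter (\<lambda>x. x \<in> \<Union>Ag1) xs) S1' \<union> greedy G (filter (\<lambda>x. x \<in> \<Union>Ag2) xs) S2"
      by (rule Cons.IH) (use Cons.prems c1 in auto)
    finally show ?thesis using True nx by (simp add: S1'_def)
  next
    case False
    then have nx: "x \<in> \<Union>Ag2" using Cons.prems(1) by auto
    define S2' where "S2' = (if consistent G (insert x S2) then insert x S2 else S2)"
    have eq: "consistent G (insert x (S1 \<union> S2)) = consistent G (insert x S2)"
    proof
      assume "consistent G (insert x (S1 \<union> S2))" then show "consistent G (insert x S2)"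
        by (rule cons_mono) auto
    next
      assume "consistent G (insert x S2)"
      then have "consistent G (S1 \<union> insert x S2)"
        by (intro indep_cons[OF ip Cons.prems(2,3)]) (use nx Cons.prems(5) in auto)
      then show "consistent G (insert x (S1 \<union> S2))" by simp
    qed
    have e2: "(if consistent G (insert x (S1 \<union> S2)) then insert x (S1 \<union> S2) else S1 \<union> S2) = S1 \<union> S2'"
      unfolding eq S2'_def by auto
    have c1: "consistent G S2'" "S2' \<subseteq> \<Union>Ag2" unfolding S2'_def using Cons.prems nx by auto
    have "greedy G (x # xs) (S1 \<union> S2) = greedy G xs (S1 \<union> S2')" using e2 by simp
    also have "\<dots> = greedy G (filter (\<lambda>x. x \<in> \<Union>Ag1) xs) S1 \<union> greedy G (filter (\<lambda>x. x \<in> \<Union>Ag2) xs) S2'"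
      by (rule Cons.IH) (use Cons.prems c1 in auto)
    finally show ?thesis using False nx by (simp add: S2'_def)
  qed
qed

lemma sorted_restr_iff:
  assumes "set xs \<subseteq> \<Union>A"
  shows "sorted_wrt (\<lambda>a b. support (restr P A) b \<le> support (restr P A) a) xs =
         sorted_wrt (\<lambda>a b. support P b \<le> support P a) xs"
proof
  assume "sorted_wrt (\<lambda>a b. support (restr P A) b \<le> support (restr P A) a) xs"
  then show "sorted_wrt (\<lambda>a b. support P b \<le> support P a) xs"
  proof (rule sorted_wrt_mono_rel[rotated])
    fix x y assume h: "x \<in> set xs" "y \<in> set xs" "support (restr P A) y \<le> support (restr P A) x"
    have xy: "x \<in> \<Union>A" "y \<in> \<Union>A" using h(1,2) assms by auto
    show "support P y \<le> support P x" using h(3) support_restr[OF xy(1)] support_restr[OF xy(2)] by simp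
  qed
next
  assume "sorted_wrt (\<lambda>a b. support P b \<le> support P a) xs"
  then show "sorted_wrt (\<lambda>a b. support (restr P A) b \<le> support (restr P A) a) xs"
  proof (rule sorted_wrt_mono_rel[rotated])
    fix x y assume h: "x \<in> set xs" "y \<in> set xs" "support P y \<le> support P x"
    have xy: "x \<in> \<Union>A" "y \<in> \<Union>A" using h(1,2) assms by auto
    show "support (restr P A) y \<le> support (restr P A) x" using h(3) support_restr[OF xy(1)] support_restr[OF xy(2)] by simp
  qed
qed

lemma RA_sep:
  assumes ip: "independent_partition G Ag Ag1 Ag2" and c0: "consistent G {}"
  shows "RA G Ag P = {J1\<union>J2 | J1 J2. J1 \<in> RA G Ag1 (restr P Ag1) \<and> J2 \<in> RA G Ag2 (restr P Ag2)}"
proof (rule sep[where X="\<Union>Ag1" and Y="\<Union>Ag2"])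
  note f = ip_facts[OF ip]
  have dj: "\<Union>Ag1 \<inter> \<Union>Ag2 = {}" by (fact f(4))
  have gsplit: "greedy G xs {} = greedy G (filter (\<lambda>x. x \<in> \<Union>Ag1) xs) {} \<union> greedy G (filter (\<lambda>x. x \<in> \<Union>Ag2) xs) {}"
    if "set xs \<subseteq> \<Union>Ag1 \<union> \<Union>Ag2" for xs
    using greedy_split[OF ip that c0 _ c0] by simp
  have gs: "greedy G xs {} \<subseteq> set xs" for xs using greedy_sub[of G xs "{}"] by simp
  show "\<forall>J\<in>RA G Ag P. J \<subseteq> \<Union>Ag1 \<union> \<Union>Ag2" using f(3) gs unfolding RA_def by blast
  show "\<forall>J\<in>RA G Ag P. J \<inter> \<Union>Ag1 \<in> RA G Ag1 (restr P Ag1) \<and> J \<inter> \<Union>Ag2 \<in> RA G Ag2 (restr P Ag2)"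
  proof
    fix J assume "J \<in> RA G Ag P"
    then obtain xs where J: "J = greedy G xs {}" and xs: "distinct xs" "set xs = \<Union>Ag"
      "sorted_wrt (\<lambda>a b. support P b \<le> support P a) xs"
      unfolding RA_def mem_Collect_eq by (elim conjE exE) (intro that)
    define xs1 where "xs1 = filter (\<lambda>x. x \<in> \<Union>Ag1) xs"
    define xs2 where "xs2 = filter (\<lambda>x. x \<in> \<Union>Ag2) xs"
    have Jeq: "J = greedy G xs1 {} \<union> greedy G xs2 {}" unfolding J xs1_def xs2_def
      by (rule gsplit) (use xs(2) f(3) in auto)
    have sx: "set xs1 = \<Union>Ag1" "set xs2 = \<Union>Ag2" unfolding xs1_def xs2_def using xs(2) f(3) by auto
    have "J \<inter> \<Union>Ag1 = greedy G xs1 {}" unfolding Jeq using gs[of xs1] gs[of xs2] sx dj by blast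
    moreover have "J \<inter> \<Union>Ag2 = greedy G xs2 {}" unfolding Jeq using gs[of xs1] gs[of xs2] sx dj by blast
    moreover have "greedy G xs1 {} \<in> RA G Ag1 (restr P Ag1)"
      unfolding RA_def mem_Collect_eq
    proof (intro exI conjI)
      show "distinct xs1" unfolding xs1_def using xs(1) by simp
      show "set xs1 = \<Union>Ag1" by (fact sx(1))
      have "sorted_wrt (\<lambda>a b. support P b \<le> support P a) xs1" unfolding xs1_def by (rule sorted_wrt_filter[OF xs(3)])
      then show "sorted_wrt (\<lambda>a b. support (restr P Ag1) b \<le> support (restr P Ag1) a) xs1"
        using sorted_restr_iff sx by (metis order_refl)
    qed simp
    moreover have "greedy G xs2 {} \<in> RA G Ag2 (restr P Ag2)"
      unfolding RA_def mem_Collect_eq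
    proof (intro exI conjI)
      show "distinct xs2" unfolding xs2_def using xs(1) by simp
      show "set xs2 = \<Union>Ag2" by (fact sx(2))
      have "sorted_wrt (\<lambda>a b. support P b \<le> support P a) xs2" unfolding xs2_def by (rule sorted_wrt_filter[OF xs(3)])
      then show "sorted_wrt (\<lambda>a b. support (restr P Ag2) b \<le> support (restr P Ag2) a) xs2"
        using sorted_restr_iff sx by (metis order_refl)
    qed simp
    ultimately show "J \<inter> \<Union>Ag1 \<in> RA G Ag1 (restr P Ag1) \<and> J \<inter> \<Union>Ag2 \<in> RA G Ag2 (restr P Ag2)" by simp
  qed
  show "\<forall>J1\<in>RA G Ag1 (restr P Ag1). \<forall>J2\<in>RA G Ag2 (restr P Ag2). J1 \<union> J2 \<in> RA G Ag P"
  proof (intro ballI)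
    fix J1 J2 assume h1: "J1 \<in> RA G Ag1 (restr P Ag1)" and h2: "J2 \<in> RA G Ag2 (restr P Ag2)"
    from h1 obtain xs1 where J1: "J1 = greedy G xs1 {}" and xs1: "distinct xs1" "set xs1 = \<Union>Ag1"
      "sorted_wrt (\<lambda>a b. support (restr P Ag1) b \<le> support (restr P Ag1) a) xs1"
      unfolding RA_def mem_Collect_eq by (elim conjE exE) (intro that)
    from h2 obtain xs2 where J2: "J2 = greedy G xs2 {}" and xs2: "distinct xs2" "set xs2 = \<Union>Ag2"
      "sorted_wrt (\<lambda>a b. support (restr P Ag2) b \<le> support (restr P Ag2) a) xs2"
      unfolding RA_def mem_Collect_eq by (elim conjE exE) (intro that)
    define k where "k = (\<lambda>x. - int (support P x))"
    define xs where "xs = sort_key k (xs1 @ xs2)"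
    have so1: "sorted (map k xs1)" unfolding sorted_map k_def
      using xs1(3) sorted_restr_iff[of xs1 Ag1 P] xs1(2) by simp
    have so2: "sorted (map k xs2)" unfolding sorted_map k_def
      using xs2(3) sorted_restr_iff[of xs2 Ag2 P] xs2(2) by simp
    have f1: "filter (\<lambda>x. x \<in> \<Union>Ag1) xs = xs1"
    proof -
      have "filter (\<lambda>x. x \<in> \<Union>Ag1) xs1 = xs1" by (rule filter_True) (use xs1(2) in blast)
      moreover have "filter (\<lambda>x. x \<in> \<Union>Ag1) xs2 = []" by (rule filter_False) (use xs2(2) dj in blast)
      ultimately have "filter (\<lambda>x. x \<in> \<Union>Ag1) (xs1 @ xs2) = xs1" by simp
      then show ?thesis unfolding xs_def filter_sort using sort_key_id_if_sorted[OF so1] by simp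
    qed
    have f2: "filter (\<lambda>x. x \<in> \<Union>Ag2) xs = xs2"
    proof -
      have "filter (\<lambda>x. x \<in> \<Union>Ag2) xs2 = xs2" by (rule filter_True) (use xs2(2) in blast)
      moreover have "filter (\<lambda>x. x \<in> \<Union>Ag2) xs1 = []" by (rule filter_False) (use xs1(2) dj in blast)
      ultimately have "filter (\<lambda>x. x \<in> \<Union>Ag2) (xs1 @ xs2) = xs2" by simp
      then show ?thesis unfolding xs_def filter_sort using sort_key_id_if_sorted[OF so2] by simp
    qed
    have sxs: "set xs = \<Union>Ag" unfolding xs_def using xs1(2) xs2(2) f(3) by simp
    have "greedy G xs {} = J1 \<union> J2" unfolding J1 J2 using gsplit[of xs] sxs f(3) f1 f2 by simp
    moreover have "distinct xs" unfolding xs_def using xs1 xs2 dj by auto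
    moreover have "sorted_wrt (\<lambda>a b. support P b \<le> support P a) xs"
    proof -
      have "sorted (map k xs)" unfolding xs_def by simp
      then show ?thesis unfolding sorted_map k_def by (rule sorted_wrt_mono_rel[rotated]) auto
    qed
    ultimately show "J1 \<union> J2 \<in> RA G Ag P" unfolding RA_def using sxs by blast
  qed
qed



lemma ip_sym: assumes h: "independent_partition G Ag Ag1 Ag2" shows "independent_partition G Ag Ag2 Ag1"
proof -
  have "\<forall>J1\<in>JS G Ag2. \<forall>J2\<in>JS G Ag1. consistent G (J1 \<union> J2)"
  proof (intro ballI)
    fix J1 J2 assume "J1 \<in> JS G Ag2" "J2 \<in> JS G Ag1"
    then have "consistent G (J2 \<union> J1)" using h unfolding independent_partition_def by blast
    then show "consistent G (J1 \<union> J2)" by (simp add: Un_commute)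
  qed
  then show ?thesis using h unfolding independent_partition_def by blast
qed

lemma profiles_restr: "Q \<in> profiles G Ag n \<Longrightarrow> A \<subseteq> Ag \<Longrightarrow> restr Q A \<in> profiles G A n"
  unfolding profiles_def restr_def by (auto simp: subset_iff intro: JS_restr)

definition comb :: "'v form set list \<Rightarrow> 'v form set list \<Rightarrow> 'v form set list" where
  "comb Q1 Q2 = map (\<lambda>(a, b). a \<union> b) (zip Q1 Q2)"

lemma comb_prof:
  assumes ip: "independent_partition G Ag Ag1 Ag2"
    and q1: "Q1 \<in> profiles G Ag1 n" and q2: "Q2 \<in> profiles G Ag2 n"
  shows "comb Q1 Q2 \<in> profiles G Ag n" "restr (comb Q1 Q2) Ag1 = Q1" "restr (comb Q1 Q2) Ag2 = Q2"
proof -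
  note f = ip_facts[OF ip]
  have l: "length Q1 = n" "length Q2 = n" using q1 q2 by (auto simp: profiles_def)
  have j1: "Q1 ! i \<in> JS G Ag1" if "i < n" for i using q1 that l by (auto simp: profiles_def)
  have j2: "Q2 ! i \<in> JS G Ag2" if "i < n" for i using q2 that l by (auto simp: profiles_def)
  have nth: "comb Q1 Q2 ! i = Q1 ! i \<union> Q2 ! i" if "i < n" for i using that l by (simp add: comb_def)
  have lc: "length (comb Q1 Q2) = n" using l by (simp add: comb_def)
  show "comb Q1 Q2 \<in> profiles G Ag n"
    unfolding profiles_def
  proof (intro CollectI conjI subsetI)
    show "length (comb Q1 Q2) = n" by (fact lc)
    fix J assume "J \<in> set (comb Q1 Q2)"
    then obtain i where "i < n" "J = comb Q1 Q2 ! i" using lc by (metis in_set_conv_nth)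
    then show "J \<in> JS G Ag" using nth j1 j2 JS_union[OF ip] by auto
  qed
  show "restr (comb Q1 Q2) Ag1 = Q1"
  proof (rule nth_equalityI)
    show "length (restr (comb Q1 Q2) Ag1) = length Q1" using lc l by simp
    fix i assume "i < length (restr (comb Q1 Q2) Ag1)"
    then have i: "i < n" using lc by simp
    have "Q1 ! i \<subseteq> \<Union>Ag1" "Q2 ! i \<subseteq> \<Union>Ag2" using JS_sub[OF j1[OF i]] JS_sub[OF j2[OF i]] by auto
    then show "restr (comb Q1 Q2) Ag1 ! i = Q1 ! i" using i lc nth[OF i] f(4) by (auto simp: restr_def)
  qed
  show "restr (comb Q1 Q2) Ag2 = Q2"
  proof (rule nth_equalityI)
    show "length (restr (comb Q1 Q2) Ag2) = length Q2" using lc l by simp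
    fix i assume "i < length (restr (comb Q1 Q2) Ag2)"
    then have i: "i < n" using lc by simp
    have "Q1 ! i \<subseteq> \<Union>Ag1" "Q2 ! i \<subseteq> \<Union>Ag2" using JS_sub[OF j1[OF i]] JS_sub[OF j2[OF i]] by auto
    then show "restr (comb Q1 Q2) Ag2 ! i = Q2 ! i" using i lc nth[OF i] f(4) by (auto simp: restr_def)
  qed
qed

lemma DH_nth: "length P = length Q \<Longrightarrow> DH P Q = (\<Sum>i<length P. dH (P ! i) (Q ! i))"
  unfolding DH_def by (simp add: sum_list_sum_nth atLeast0LessThan)

lemma card_diff_split:
  assumes "A \<subseteq> U1 \<union> U2" "U1 \<inter> U2 = {}" "finite A"
  shows "card (A - B) = card ((A \<inter> U1) - (B \<inter> U1)) + card ((A \<inter> U2) - (B \<inter> U2))"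
proof -
  have "A - B = ((A \<inter> U1) - (B \<inter> U1)) \<union> ((A \<inter> U2) - (B \<inter> U2))" using assms by blast
  moreover have "card (((A \<inter> U1) - (B \<inter> U1)) \<union> ((A \<inter> U2) - (B \<inter> U2))) =
      card ((A \<inter> U1) - (B \<inter> U1)) + card ((A \<inter> U2) - (B \<inter> U2))"
    by (rule card_Un_disjoint) (use assms in auto)
  ultimately show ?thesis by simp
qed

lemma DH_split:
  assumes ip: "independent_partition G Ag Ag1 Ag2" and fin: "finite (\<Union>Ag)"
    and p: "set P \<subseteq> JS G Ag" and len: "length P = length Q"
  shows "DH P Q = DH (restr P Ag1) (restr Q Ag1) + DH (restr P Ag2) (restr Q Ag2)"
proof -
  note f = ip_facts[OF ip]
  have "DH P Q = (\<Sum>i<length P. dH (P ! i) (Q ! i))" by (rule DH_nth[OF len])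
  also have "\<dots> = (\<Sum>i<length P. dH (restr P Ag1 ! i) (restr Q Ag1 ! i) + dH (restr P Ag2 ! i) (restr Q Ag2 ! i))"
  proof (rule sum.cong[OF refl])
    fix i assume "i \<in> {..<length P}"
    then have i: "i < length P" by simp
    then have "P ! i \<in> JS G Ag" using p by auto
    then have s: "P ! i \<subseteq> \<Union>Ag1 \<union> \<Union>Ag2" using JS_sub f(3) by blast
    have fi: "finite (P ! i)" using s fin f(3) finite_subset by metis
    show "dH (P ! i) (Q ! i) = dH (restr P Ag1 ! i) (restr Q Ag1 ! i) + dH (restr P Ag2 ! i) (restr Q Ag2 ! i)"
      unfolding dH_def restr_def using i len card_diff_split[OF s f(4) fi] by simp
  qed
  also have "\<dots> = DH (restr P Ag1) (restr Q Ag1) + DH (restr P Ag2) (restr Q Ag2)"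
    using len by (simp add: DH_nth sum.distrib)
  finally show ?thesis .
qed

lemma maj_sub: "maj A Q \<subseteq> \<Union>A" by (auto simp: maj_def)

lemma FULL_fwd:
  assumes ip: "independent_partition G Ag Ag1 Ag2" and fin: "finite (\<Union>Ag)"
    and p: "P \<in> profiles G Ag n" and h: "J \<in> FULL_H G Ag P"
  shows "J \<inter> \<Union>Ag1 \<in> FULL_H G Ag1 (restr P Ag1)"
proof -
  note f = ip_facts[OF ip]
  have lP: "length P = n" and sP: "set P \<subseteq> JS G Ag" using p by (auto simp: profiles_def)
  from h obtain Q where J: "J \<in> JS G Ag" and q: "Q \<in> profiles G Ag (length P)"
    and cq: "consistent G (maj Ag Q)"
    and mn: "\<forall>Q'. Q' \<in> profiles G Ag (length P) \<and> consistent G (maj Ag Q') \<longrightarrow> DH P Q \<le> DH P Q'"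
    and mq: "maj Ag Q \<subseteq> J"
    unfolding FULL_H_def mem_Collect_eq by (elim conjE exE) (intro that)
  define Q1 where "Q1 = restr Q Ag1"
  define Q2 where "Q2 = restr Q Ag2"
  have q1: "Q1 \<in> profiles G Ag1 n" unfolding Q1_def using profiles_restr q f lP by blast
  have q2: "Q2 \<in> profiles G Ag2 n" unfolding Q2_def using profiles_restr q f lP by blast
  have mj1: "maj Ag1 Q1 = maj Ag Q \<inter> \<Union>Ag1" unfolding Q1_def by (rule maj_restr[OF f(1)])
  have mj2: "maj Ag2 Q2 = maj Ag Q \<inter> \<Union>Ag2" unfolding Q2_def by (rule maj_restr[OF f(2)])
  have spl: "DH P Q' = DH (restr P Ag1) (restr Q' Ag1) + DH (restr P Ag2) (restr Q' Ag2)"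
    if "Q' \<in> profiles G Ag n" for Q'
    by (rule DH_split[OF ip fin sP]) (use that lP in \<open>simp add: profiles_def\<close>)
  have cq2: "consistent G (maj Ag2 Q2)" unfolding mj2 by (rule cons_mono[OF cq]) auto
  show ?thesis
    unfolding FULL_H_def mem_Collect_eq length_restr
  proof (intro conjI exI[of _ Q1])
    show "J \<inter> \<Union>Ag1 \<in> JS G Ag1" by (rule JS_restr[OF J f(1)])
    show "Q1 \<in> profiles G Ag1 (length P)" using q1 lP by simp
    show "consistent G (maj Ag1 Q1)" unfolding mj1 by (rule cons_mono[OF cq]) auto
    show "maj Ag1 Q1 \<subseteq> J \<inter> \<Union>Ag1" unfolding mj1 using mq by auto
    show "\<forall>Q'. Q' \<in> profiles G Ag1 (length P) \<and> consistent G (maj Ag1 Q') \<longrightarrow>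
            DH (restr P Ag1) Q1 \<le> DH (restr P Ag1) Q'"
    proof (intro allI impI, elim conjE)
      fix Q1' assume a: "Q1' \<in> profiles G Ag1 (length P)" "consistent G (maj Ag1 Q1')"
      have a1: "Q1' \<in> profiles G Ag1 n" using a(1) lP by simp
      define Q' where "Q' = comb Q1' Q2"
      have q': "Q' \<in> profiles G Ag n" "restr Q' Ag1 = Q1'" "restr Q' Ag2 = Q2"
        unfolding Q'_def using comb_prof[OF ip a1 q2] by auto
      have "maj Ag Q' = maj Ag1 Q1' \<union> maj Ag2 Q2" using maj_split[OF ip, of Q'] q' by simp
      moreover have "consistent G (maj Ag1 Q1' \<union> maj Ag2 Q2)"
        by (rule indep_cons[OF ip a(2) maj_sub cq2 maj_sub])
      ultimately have "consistent G (maj Ag Q')" by simp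
      then have "DH P Q \<le> DH P Q'" using mn q'(1) lP by auto
      moreover have "DH P Q = DH (restr P Ag1) Q1 + DH (restr P Ag2) Q2"
        unfolding Q1_def Q2_def by (rule spl) (use q lP in simp)
      moreover have "DH P Q' = DH (restr P Ag1) Q1' + DH (restr P Ag2) Q2"
        using spl[OF q'(1)] q' by simp
      ultimately show "DH (restr P Ag1) Q1 \<le> DH (restr P Ag1) Q1'" by simp
    qed
  qed
qed

lemma FULL_bwd:
  assumes ip: "independent_partition G Ag Ag1 Ag2" and fin: "finite (\<Union>Ag)"
    and p: "P \<in> profiles G Ag n" and h1: "J1 \<in> FULL_H G Ag1 (restr P Ag1)"
    and h2: "J2 \<in> FULL_H G Ag2 (restr P Ag2)"
  shows "J1 \<union> J2 \<in> FULL_H G Ag P"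
proof -
  note f = ip_facts[OF ip]
  have lP: "length P = n" and sP: "set P \<subseteq> JS G Ag" using p by (auto simp: profiles_def)
  from h1 obtain Q1 where J1: "J1 \<in> JS G Ag1" and q1: "Q1 \<in> profiles G Ag1 n"
    and cq1: "consistent G (maj Ag1 Q1)"
    and mn1: "\<forall>Q'. Q' \<in> profiles G Ag1 n \<and> consistent G (maj Ag1 Q') \<longrightarrow> DH (restr P Ag1) Q1 \<le> DH (restr P Ag1) Q'"
    and mq1: "maj Ag1 Q1 \<subseteq> J1"
    unfolding FULL_H_def mem_Collect_eq length_restr lP by (elim conjE exE) (intro that)
  from h2 obtain Q2 where J2: "J2 \<in> JS G Ag2" and q2: "Q2 \<in> profiles G Ag2 n"
    and cq2: "consistent G (maj Ag2 Q2)"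
    and mn2: "\<forall>Q'. Q' \<in> profiles G Ag2 n \<and> consistent G (maj Ag2 Q') \<longrightarrow> DH (restr P Ag2) Q2 \<le> DH (restr P Ag2) Q'"
    and mq2: "maj Ag2 Q2 \<subseteq> J2"
    unfolding FULL_H_def mem_Collect_eq length_restr lP by (elim conjE exE) (intro that)
  have spl: "DH P Q' = DH (restr P Ag1) (restr Q' Ag1) + DH (restr P Ag2) (restr Q' Ag2)"
    if "Q' \<in> profiles G Ag n" for Q'
    by (rule DH_split[OF ip fin sP]) (use that lP in \<open>simp add: profiles_def\<close>)
  define Q where "Q = comb Q1 Q2"
  have q: "Q \<in> profiles G Ag n" "restr Q Ag1 = Q1" "restr Q Ag2 = Q2"
    unfolding Q_def using comb_prof[OF ip q1 q2] by auto
  have mQ: "maj Ag Q = maj Ag1 Q1 \<union> maj Ag2 Q2" using maj_split[OF ip, of Q] q by simp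
  show ?thesis
    unfolding FULL_H_def mem_Collect_eq lP
  proof (intro conjI exI[of _ Q])
    show "J1 \<union> J2 \<in> JS G Ag" by (rule JS_union[OF ip J1 J2])
    show "Q \<in> profiles G Ag n" by (fact q(1))
    show "consistent G (maj Ag Q)" unfolding mQ by (rule indep_cons[OF ip cq1 maj_sub cq2 maj_sub])
    show "maj Ag Q \<subseteq> J1 \<union> J2" unfolding mQ using mq1 mq2 by auto
    show "\<forall>Q'. Q' \<in> profiles G Ag n \<and> consistent G (maj Ag Q') \<longrightarrow> DH P Q \<le> DH P Q'"
    proof (intro allI impI, elim conjE)
      fix Q' assume a: "Q' \<in> profiles G Ag n" "consistent G (maj Ag Q')"
      have r1: "restr Q' Ag1 \<in> profiles G Ag1 n" using profiles_restr a(1) f(1) by blast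
      have r2: "restr Q' Ag2 \<in> profiles G Ag2 n" using profiles_restr a(1) f(2) by blast
      have c1: "consistent G (maj Ag1 (restr Q' Ag1))" unfolding maj_restr[OF f(1)] by (rule cons_mono[OF a(2)]) auto
      have c2: "consistent G (maj Ag2 (restr Q' Ag2))" unfolding maj_restr[OF f(2)] by (rule cons_mono[OF a(2)]) auto
      have "DH (restr P Ag1) Q1 \<le> DH (restr P Ag1) (restr Q' Ag1)" using mn1 r1 c1 by blast
      moreover have "DH (restr P Ag2) Q2 \<le> DH (restr P Ag2) (restr Q' Ag2)" using mn2 r2 c2 by blast
      ultimately show "DH P Q \<le> DH P Q'" using spl[OF a(1)] spl[OF q(1)] q by simp
    qed
  qed
qed

lemma FULL_sep:
  assumes ip: "independent_partition G Ag Ag1 Ag2" and fin: "finite (\<Union>Ag)"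
    and p: "P \<in> profiles G Ag n"
  shows "FULL_H G Ag P = {J1\<union>J2 | J1 J2. J1 \<in> FULL_H G Ag1 (restr P Ag1) \<and> J2 \<in> FULL_H G Ag2 (restr P Ag2)}"
proof (rule sep[where X="\<Union>Ag1" and Y="\<Union>Ag2"])
  show "\<forall>J\<in>FULL_H G Ag P. J \<subseteq> \<Union>Ag1 \<union> \<Union>Ag2" using ip_facts(3)[OF ip] by (auto simp: FULL_H_def JS_def)
  show "\<forall>J\<in>FULL_H G Ag P. J \<inter> \<Union>Ag1 \<in> FULL_H G Ag1 (restr P Ag1) \<and> J \<inter> \<Union>Ag2 \<in> FULL_H G Ag2 (restr P Ag2)"
    using FULL_fwd[OF ip fin p] FULL_fwd[OF ip_sym[OF ip] fin p] by blast
  show "\<forall>J1\<in>FULL_H G Ag1 (restr P Ag1). \<forall>J2\<in>FULL_H G Ag2 (restr P Ag2). J1 \<union> J2 \<in> FULL_H G Ag P"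
    using FULL_bwd[OF ip fin p] by blast
qed


theorem proposition3:
  fixes \<Gamma> :: "'v form" and n :: nat
    and Ag Ag1 Ag2 :: "'v form set set" and P :: "'v form set list"
  assumes "consistent \<Gamma> {}"
    and "n \<ge> 1"
    and "agenda Ag"
    and "independent_partition \<Gamma> Ag Ag1 Ag2"
    and "P \<in> profiles \<Gamma> Ag n"
  shows "\<forall>R \<in> {MC, MCC, RA, FULL_H}.
           R \<Gamma> Ag P = {J1 \<union> J2 | J1 J2. J1 \<in> R \<Gamma> Ag1 (restr P Ag1) \<and> J2 \<in> R \<Gamma> Ag2 (restr P Ag2)}"
proof -
  have fin: "finite (\<Union>Ag)"
  proof (rule finite_Union)
    show "finite Ag" using assms(3) by (simp add: agenda_def)
    fix I assume "I \<in> Ag"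
    then have "issue I" using assms(3) by (simp add: agenda_def)
    then show "finite I" by (auto simp: issue_def)
  qed
  note e1 = MC_sep[OF assms(4), of P]
  note e2 = MCC_sep[OF assms(4) fin, of P]
  note e3 = RA_sep[OF assms(4) assms(1), of P]
  note e4 = FULL_sep[OF assms(4) fin assms(5)]
  show ?thesis using e1 e2 e3 e4 by simp
qed

end
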